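(* Let $Q=[u_1,\dots,u_n]\subset\mathbb{S}^2$ with $n\ge 6$ be a spherical polygon not contained in any closed hemisphere, without self-intersections and antipodal intersections, with exactly three essential vertices. Then no two of the three essential vertices are consecutive in $Q$.
   Context: A spherical polygon has edges the minimal great-circle arcs between consecutive vertices (indices mod $n$); no three vertices lie on a common great circle. A set is balanced if not contained in any closed hemisphere; for balanced $Q$, $u_m$ is essential if the vertex set minus $u_m$ is not balanced. Self-intersection: two non-adjacent edges intersect; antipodal intersection: non-adjacent edges $e,f$ with $e\cap(-f)\neq\emptyset$. *)

theory Defs
  imports "HOL-Analysis.Analysis"
begin

text \<open>Spherical polygon: vertices u 0, ..., u (n-1) on the unit sphere in R^3,
  indices taken mod n.\<close>

definition on_sphere :: "real^3 \<Rightarrow> bool" where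
  "on_sphere x \<longleftrightarrow> norm x = 1"

text \<open>Minimal great-circle arc between two non-antipodal unit vectors:
  the unit vectors in the cone spanned by them.\<close>
definition sarc :: "real^3 \<Rightarrow> real^3 \<Rightarrow> (real^3) set" where
  "sarc a b = {x. norm x = 1 \<and> (\<exists>s t. s \<ge> 0 \<and> t \<ge> 0 \<and> x = s *\<^sub>R a + t *\<^sub>R b)}"

definition edge :: "(nat \<Rightarrow> real^3) \<Rightarrow> nat \<Rightarrow> nat \<Rightarrow> (real^3) set" where
  "edge u n i = sarc (u i) (u (Suc i mod n))"

definition common_great_circle :: "real^3 \<Rightarrow> real^3 \<Rightarrow> real^3 \<Rightarrow> bool" where
  "common_great_circle a b c \<longleftrightarrow> (\<exists>w. w \<noteq> 0 \<and> w \<bullet> a = 0 \<and> w \<bullet> b = 0 \<and> w \<bullet> c = 0)"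

definition in_closed_hemisphere :: "(real^3) set \<Rightarrow> bool" where
  "in_closed_hemisphere S \<longleftrightarrow> (\<exists>v. v \<noteq> 0 \<and> (\<forall>x\<in>S. v \<bullet> x \<ge> 0))"

definition balanced :: "(real^3) set \<Rightarrow> bool" where
  "balanced S \<longleftrightarrow> \<not> in_closed_hemisphere S"

definition vertices :: "(nat \<Rightarrow> real^3) \<Rightarrow> nat \<Rightarrow> (real^3) set" where
  "vertices u n = u ` {..<n}"

definition essential :: "(nat \<Rightarrow> real^3) \<Rightarrow> nat \<Rightarrow> nat \<Rightarrow> bool" where
  "essential u n m \<longleftrightarrow> \<not> balanced (vertices u n - {u m})"

definition nonadjacent :: "nat \<Rightarrow> nat \<Rightarrow> nat \<Rightarrow> bool" where
  "nonadjacent n i j \<longleftrightarrow> i < n \<and> j < n \<and> i \<noteq> j \<and> Suc i mod n \<noteq> j \<and> Suc j mod n \<noteq> i"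

definition self_intersecting :: "(nat \<Rightarrow> real^3) \<Rightarrow> nat \<Rightarrow> bool" where
  "self_intersecting u n \<longleftrightarrow>
     (\<exists>i j. nonadjacent n i j \<and> edge u n i \<inter> edge u n j \<noteq> {})"

definition antipodal_intersecting :: "(nat \<Rightarrow> real^3) \<Rightarrow> nat \<Rightarrow> bool" where
  "antipodal_intersecting u n \<longleftrightarrow>
     (\<exists>i j. nonadjacent n i j \<and> edge u n i \<inter> uminus ` edge u n j \<noteq> {})"

end

theory Submission imports Defs begin
unbundle cross3_syntax
lemma decomp: fixes a b y :: "real^3"
  shows "((a \<times> b) \<bullet> (a \<times> b)) *\<^sub>R y = ((y \<times> b) \<bullet> (a \<times> b)) *\<^sub>R a + ((a \<times> y) \<bullet> (a \<times> b)) *\<^sub>R b + (y \<bullet> (a \<times> b)) *\<^sub>R (a \<times> b)"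
  by (simp add: cross3_simps forall_3)
lemma orth2: fixes a b :: "real^3" obtains w where "w \<noteq> 0" "w \<bullet> a = 0" "w \<bullet> b = 0"
proof -
  have "dim {a,b} \<le> card {a,b}"
    by (rule dim_le_card) (auto intro: span_base)
  also have "card {a,b} \<le> 2" by (simp add: card_insert_if)
  finally have "dim {a,b} < DIM(real^3)" by simp
  then obtain w where "w \<noteq> 0" "\<And>y. y \<in> span {a,b} \<Longrightarrow> orthogonal w y"
    using orthogonal_to_subspace_exists[OF \<open>dim {a,b} < DIM(real^3)\<close>] by blast
  then show ?thesis using that by (simp add: orthogonal_def span_base)
qed

lemma idx_in:
  assumes "i < n" "d + 2 < n" 
  shows "(i+2+d) mod n < n \<and> (i+2+d) mod n \<noteq> i \<and> (i+2+d) mod n \<noteq> Suc i mod n"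
proof (cases "i+2+d < n")
  case True
  then show ?thesis using assms by (auto simp: mod_Suc)
next
  case False
  then have e: "(i+2+d) mod n = i+2+d-n"
    using assms by (simp add: le_mod_geq)
  have "Suc i mod n = (if Suc i = n then 0 else Suc i)" using assms by (simp add: mod_Suc)
  then show ?thesis using assms False e by auto
qed

lemma idx_cover:
  assumes "i < n" "j < n" "j \<noteq> i" "j \<noteq> Suc i mod n" "3 \<le> n"
  shows "\<exists>d. d + 2 < n \<and> (i+2+d) mod n = j"
proof (cases "i + 2 \<le> j")
  case True
  then show ?thesis using assms by (intro exI[of _ "j-i-2"]) auto
next
  case False
  have s: "Suc i mod n = (if Suc i = n then 0 else Suc i)" using assms by (simp add: mod_Suc)
  have "j < i \<or> (Suc i = n \<and> j \<noteq> 0)" using False assms s by (auto split: if_splits)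
  then have "j < i" using assms by auto
  then have "j + n - i - 2 + 2 < n \<or> Suc i = n" using assms s by auto
  show ?thesis
  proof (intro exI[of _ "j+n-i-2"] conjI)
    show "j + n - i - 2 + 2 < n" using \<open>j < i\<close> assms s by (auto split: if_splits)
    have e: "i+2+(j+n-i-2) = j + n" using \<open>j < i\<close> assms s by (auto split: if_splits)
    show "(i+2+(j+n-i-2)) mod n = j" by (simp only: e) (simp add: assms(2))
  qed
qed

lemma no_consec:
  fixes u :: "nat \<Rightarrow> real^3" and n :: nat
  assumes n3: "n \<ge> 3"
    and sph: "\<forall>i<n. on_sphere (u i)"
    and gpa: "\<forall>i<n. \<forall>j<n. \<forall>k<n. i \<noteq> j \<and> j \<noteq> k \<and> i \<noteq> k \<longrightarrow>
           \<not> common_great_circle (u i) (u j) (u k)"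
    and bal: "balanced (vertices u n)"
    and nsi: "\<not> self_intersecting u n"
    and nai: "\<not> antipodal_intersecting u n"
    and i: "i < n" and ei: "essential u n i" and ei': "essential u n (Suc i mod n)"
  shows False
proof -
  have gp: "w \<bullet> u k \<noteq> 0" if "i1 < n" "j1 < n" "k < n" "i1 \<noteq> j1" "j1 \<noteq> k" "i1 \<noteq> k"
    "w \<noteq> 0" "w \<bullet> u i1 = 0" "w \<bullet> u j1 = 0" for i1 j1 k w
    using gpa that unfolding common_great_circle_def by blast
  have third: "\<exists>k<n. k \<noteq> i1 \<and> k \<noteq> j1" for i1 j1
  proof -
    have "\<exists>k\<in>{0,1,2::nat}. k \<noteq> i1 \<and> k \<noteq> j1" by auto
    then obtain k where "k \<in> {0,1,2::nat}" "k \<noteq> i1 \<and> k \<noteq> j1" by blast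
    moreover then have "k < n" using n3 by auto
    ultimately show ?thesis by blast
  qed
  have par: "u j1 \<noteq> c *\<^sub>R u i1" if "i1 < n" "j1 < n" "i1 \<noteq> j1" for i1 j1 c
  proof
    assume h: "u j1 = c *\<^sub>R u i1"
    obtain k where k: "k < n" "k \<noteq> i1" "k \<noteq> j1" using third by blast
    obtain w where w: "w \<noteq> 0" "w \<bullet> u i1 = 0" "w \<bullet> u k = 0" using orth2 by blast
    have "w \<bullet> u j1 = 0" using h w by simp
    then show False using gp[of i1 k j1 w] that k w by auto
  qed
  have dist: "u j1 \<noteq> u i1" if "i1 < n" "j1 < n" "i1 \<noteq> j1" for i1 j1
    using par[OF that, of 1] by simp
  have nz: "u k \<noteq> 0" if "k < n" for k
    using sph that unfolding on_sphere_def by auto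
  define i' where "i' = Suc i mod n"
  have i'n: "i' < n" using i unfolding i'_def by simp
  have ii': "i \<noteq> i'" using i n3 unfolding i'_def by (auto simp: mod_Suc)
  define a where "a = u i"
  define b where "b = u i'"
  define w where "w = a \<times> b"
  have w0: "w \<noteq> 0"
  proof
    assume "w = 0"
    then have "collinear {0,a,b}" unfolding w_def by (simp add: cross_eq_0)
    then show False unfolding collinear_lemma a_def b_def
      using nz[OF i] nz[OF i'n] par[OF i i'n ii'] by auto
  qed
  have wa: "w \<bullet> a = 0" and wb: "w \<bullet> b = 0" unfolding w_def by (simp_all add: dot_cross_self)
  have wJ: "w \<bullet> u j \<noteq> 0" if "j < n" "j \<noteq> i" "j \<noteq> i'" for j
    using gp[of i i' j w] that i i'n ii' w0 wa wb a_def b_def by auto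
  have hemi: "\<exists>v. v \<bullet> u m < 0 \<and> (\<forall>j<n. j \<noteq> m \<longrightarrow> v \<bullet> u j \<ge> 0)" if mn: "m < n" and em: "essential u n m" for m
  proof -
    obtain v where v: "v \<noteq> 0" "\<forall>x\<in>vertices u n - {u m}. v \<bullet> x \<ge> 0"
      using em unfolding essential_def balanced_def in_closed_hemisphere_def by blast
    have o: "v \<bullet> u j \<ge> 0" if "j < n" "j \<noteq> m" for j
      using v(2) dist[OF \<open>m < n\<close> that(1)] that unfolding vertices_def by auto
    have "v \<bullet> u m < 0"
    proof (rule ccontr)
      assume "\<not> v \<bullet> u m < 0"
      then have "\<forall>x\<in>vertices u n. v \<bullet> x \<ge> 0" using o unfolding vertices_def by force
      then show False using bal v(1) unfolding balanced_def in_closed_hemisphere_def by blast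
    qed
    then show ?thesis using o by blast
  qed
  obtain va where va: "va \<bullet> a < 0" "\<forall>j<n. j \<noteq> i \<longrightarrow> va \<bullet> u j \<ge> 0"
    using hemi[OF i ei] a_def by blast
  obtain vb where vb: "vb \<bullet> b < 0" "\<forall>j<n. j \<noteq> i' \<longrightarrow> vb \<bullet> u j \<ge> 0"
    using hemi[OF i'n ei'[folded i'_def]] b_def by blast
  have vab: "va \<bullet> b \<ge> 0" using va(2) i'n ii' b_def by auto
  have vba: "vb \<bullet> a \<ge> 0" using vb(2) i ii' a_def by auto
  have cross: "(w \<bullet> u j) * (w \<bullet> u (Suc j mod n)) \<ge> 0"
    if j: "j < n" "j \<noteq> i" "j \<noteq> i'" "Suc j mod n \<noteq> i" "Suc j mod n \<noteq> i'" for j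
  proof (rule ccontr)
    assume neg: "\<not> ?thesis"
    define j' where "j' = Suc j mod n"
    have j'n: "j' < n" using j unfolding j'_def by simp
    have jj': "j \<noteq> j'" using j n3 unfolding j'_def by (auto simp: mod_Suc)
    define p where "p = w \<bullet> u j"
    define q where "q = w \<bullet> u j'"
    have pq: "p * q < 0" using neg unfolding p_def q_def j'_def by simp
    define s where "s = \<bar>q\<bar>"
    define t where "t = \<bar>p\<bar>"
    have s0: "s > 0" and t0: "t > 0" using pq unfolding s_def t_def
      by (auto simp: mult_less_0_iff)
    define y where "y = s *\<^sub>R u j + t *\<^sub>R u j'"
    have wy: "w \<bullet> y = 0"
      using pq unfolding y_def s_def t_def p_def q_def
      by (auto simp: inner_add_right mult_less_0_iff)
    have y0: "y \<noteq> 0"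
    proof
      assume "y = 0"
      then have "t *\<^sub>R u j' = (- s) *\<^sub>R u j" unfolding y_def
        by (simp add: eq_neg_iff_add_eq_0 add.commute)
      then have eq: "t *\<^sub>R u j' = (- s) *\<^sub>R u j" .
      have "u j' = (1/t) *\<^sub>R (t *\<^sub>R u j')" using t0 by simp
      also have "\<dots> = (- s / t) *\<^sub>R u j" unfolding eq by simp
      finally have "u j' = (- s / t) *\<^sub>R u j" .
      then show False using par[OF j(1) j'n jj'] by blast
    qed
    define N where "N = w \<bullet> w"
    have N0: "N > 0" using w0 unfolding N_def by simp
    define al where "al = ((y \<times> b) \<bullet> w) / N"
    define be where "be = ((a \<times> y) \<bullet> w) / N"
    have "N *\<^sub>R y = (N * al) *\<^sub>R a + (N * be) *\<^sub>R b"
      using decomp[of a b y] wy N0 unfolding N_def al_def be_def w_def by (simp add: inner_commute)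
    then have "N *\<^sub>R y = N *\<^sub>R (al *\<^sub>R a + be *\<^sub>R b)" by (simp add: scaleR_add_right)
    then have yd: "y = al *\<^sub>R a + be *\<^sub>R b" using N0 by simp
    have vay: "va \<bullet> y \<ge> 0"
      using va(2) j j'n s0 t0 unfolding y_def j'_def by (simp add: inner_add_right)
    have vby: "vb \<bullet> y \<ge> 0"
      using vb(2) j j'n s0 t0 unfolding y_def j'_def by (simp add: inner_add_right)
    have vay2: "va \<bullet> y = al * (va \<bullet> a) + be * (va \<bullet> b)" using yd by (simp add: inner_add_right)
    have vby2: "vb \<bullet> y = al * (vb \<bullet> a) + be * (vb \<bullet> b)" using yd by (simp add: inner_add_right)
    define z where "z = (1 / norm y) *\<^sub>R y"
    have ny: "norm y > 0" using y0 by simp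
    have nz1: "norm z = 1" using y0 unfolding z_def by simp
    have zj: "z \<in> edge u n j"
      unfolding edge_def sarc_def
      using nz1 s0 t0 ny j'_def by (intro CollectI conjI exI[of _ "s / norm y"] exI[of _ "t / norm y"])
         (auto simp: z_def y_def scaleR_add_right)
    have nadj: "nonadjacent n i j" "nonadjacent n j i"
      using i j unfolding nonadjacent_def i'_def by auto
    show False
    proof (cases "al > 0")
      case True
      have "be > 0"
      proof (rule ccontr)
        assume "\<not> be > 0"
        then have "be * (va \<bullet> b) \<le> 0" using vab by (simp add: mult_nonpos_nonneg)
        moreover have "al * (va \<bullet> a) < 0" using True va(1) by (simp add: mult_pos_neg)
        ultimately show False using vay vay2 by linarith
      qed
      have "z \<in> edge u n i"
        unfolding edge_def sarc_def
        using nz1 True \<open>be > 0\<close> ny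
        by (intro CollectI conjI exI[of _ "al / norm y"] exI[of _ "be / norm y"])
           (auto simp: z_def yd scaleR_add_right a_def b_def i'_def)
      then show False using zj nsi nadj unfolding self_intersecting_def by blast
    next
      case False
      have "be \<le> 0"
      proof (rule ccontr)
        assume "\<not> be \<le> 0"
        then have "be * (vb \<bullet> b) < 0" using vb(1) by (simp add: mult_pos_neg)
        moreover have "al * (vb \<bullet> a) \<le> 0" using False vba by (simp add: mult_nonpos_nonneg)
        ultimately show False using vby vby2 by linarith
      qed
      have ez: "- z = (- al / norm y) *\<^sub>R a + (- be / norm y) *\<^sub>R b"
        unfolding z_def by (subst (2) yd) (simp add: scaleR_add_right divide_inverse mult.commute)
      have n2: "norm (- z) = 1" using nz1 by simp
      have c1: "- al / norm y \<ge> 0" "- be / norm y \<ge> 0" using False \<open>be \<le> 0\<close> ny by (auto simp: divide_nonpos_pos)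
      have "- z \<in> edge u n i"
        unfolding edge_def sarc_def i'_def[symmetric] a_def[symmetric] b_def[symmetric]
        using n2 c1 ez by blast
      then have "z \<in> uminus ` edge u n i" by (metis image_eqI minus_minus)
      then show False using zj nai nadj unfolding antipodal_intersecting_def by blast
    qed
  qed
  define idx where "idx d = (i+2+d) mod n" for d
  have idxJ: "idx d < n \<and> idx d \<noteq> i \<and> idx d \<noteq> i'" if "d + 2 < n" for d
    using idx_in[OF i that] unfolding idx_def i'_def by blast
  have propg: "(w \<bullet> u (idx d) > 0) = (w \<bullet> u (idx 0) > 0)" if "d + 2 < n" for d
    using that
  proof (induction d)
    case 0 then show ?case by simp
  next
    case (Suc d)
    have s: "Suc (idx d) mod n = idx (Suc d)" unfolding idx_def by (simp add: mod_Suc_eq)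
    have c: "(w \<bullet> u (idx d)) * (w \<bullet> u (idx (Suc d))) \<ge> 0"
      using cross[of "idx d"] idxJ[of d] idxJ[of "Suc d"] Suc.prems s by auto
    have "w \<bullet> u (idx d) \<noteq> 0" "w \<bullet> u (idx (Suc d)) \<noteq> 0"
      using wJ idxJ[of d] idxJ[of "Suc d"] Suc.prems by auto
    then have "(w \<bullet> u (idx (Suc d)) > 0) = (w \<bullet> u (idx d) > 0)"
      using c by (auto simp: zero_le_mult_iff)
    then show ?case using Suc by simp
  qed
  have allsame: "(w \<bullet> u j > 0) = (w \<bullet> u (idx 0) > 0)" if jj: "j < n" "j \<noteq> i" "j \<noteq> i'" for j
  proof -
    obtain d where "d + 2 < n" "idx d = j" using idx_cover[OF i jj(1,2) jj(3)[unfolded i'_def] n3]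
      unfolding idx_def by blast
    then show ?thesis using propg by blast
  qed
  have ex_pos: "\<exists>j<n. j \<noteq> i \<and> j \<noteq> i' \<and> w \<bullet> u j > 0"
  proof (rule ccontr)
    assume h: "\<not> ?thesis"
    have "\<forall>x\<in>vertices u n. (- w) \<bullet> x \<ge> 0"
    proof
      fix x assume "x \<in> vertices u n"
      then obtain j where "j < n" "x = u j" unfolding vertices_def by auto
      then show "(- w) \<bullet> x \<ge> 0" using h wa wb a_def b_def
        by (cases "j = i \<or> j = i'") (auto simp: not_less dest: spec[of _ j])
    qed
    then show False using bal w0 unfolding balanced_def in_closed_hemisphere_def
      by (metis neg_equal_0_iff_equal)
  qed
  have ex_neg: "\<exists>j<n. j \<noteq> i \<and> j \<noteq> i' \<and> w \<bullet> u j < 0"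
  proof (rule ccontr)
    assume h: "\<not> ?thesis"
    have "\<forall>x\<in>vertices u n. w \<bullet> x \<ge> 0"
    proof
      fix x assume "x \<in> vertices u n"
      then obtain j where "j < n" "x = u j" unfolding vertices_def by auto
      then show "w \<bullet> x \<ge> 0" using h wa wb a_def b_def
        by (cases "j = i \<or> j = i'") (auto simp: not_less dest: spec[of _ j])
    qed
    then show False using bal w0 unfolding balanced_def in_closed_hemisphere_def by blast
  qed
  show False using ex_pos ex_neg allsame by force
qed

theorem lemma6:
  fixes u :: "nat \<Rightarrow> real^3" and n :: nat
  assumes "n \<ge> 6"
    and "\<forall>i<n. on_sphere (u i)"
    and "\<forall>i<n. \<forall>j<n. \<forall>k<n. i \<noteq> j \<and> j \<noteq> k \<and> i \<noteq> k \<longrightarrow>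
           \<not> common_great_circle (u i) (u j) (u k)"
    and "balanced (vertices u n)"
    and "\<not> self_intersecting u n"
    and "\<not> antipodal_intersecting u n"
    and "card {m. m < n \<and> essential u n m} = 3"
  shows "\<forall>i<n. \<not> (essential u n i \<and> essential u n (Suc i mod n))"
proof (intro allI impI notI)
  fix i assume "i < n" "essential u n i \<and> essential u n (Suc i mod n)"
  then show False using no_consec[of n u i] assms by auto
qed

end
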